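(* Let $G$ be a finite abelian $p$-group ($p$ any prime). Then the lattice $\mathrm{Char}(G)$ of characteristic subgroups of $G$ is directly indecomposable, i.e. it is not isomorphic to a direct product of two nontrivial lattices.
   Context: A lattice is nontrivial if it has more than one element. *)

theory Defs
  imports "HOL-Algebra.Algebra"
begin

definition characteristic_subgroup :: "'a set \<Rightarrow> ('a, 'b) monoid_scheme \<Rightarrow> bool" where
  "characteristic_subgroup H G \<longleftrightarrow>
     subgroup H G \<and> (\<forall>\<phi> \<in> iso G G. \<phi> ` H = H)"

text \<open>The set of characteristic subgroups of G (ordered by inclusion, this is the lattice Char(G)).\<close>
definition Char :: "('a, 'b) monoid_scheme \<Rightarrow> 'a set set" where
  "Char G = {H. characteristic_subgroup H G}"

end

theory Submission
  imports Defs "HOL-Computational_Algebra.Primes"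
begin

lemma (in group) bezout_mem:
  assumes "subgroup N G" "x \<in> carrier G" "x [^] (a::int) \<in> N" "x [^] (b::int) \<in> N" "coprime a b"
  shows "x \<in> N"
proof -
  obtain u v where uv: "u * a + v * b = 1"
    using bezout_int[of a b] assms(5) by (metis coprime_iff_gcd_eq_1)
  have "x = x [^] (a * u + b * v)" using uv assms(2) by (simp add: algebra_simps)
  also have "\<dots> = (x [^] a) [^] u \<otimes> (x [^] b) [^] v"
    using assms(2) by (simp add: int_pow_mult int_pow_pow)
  also have "\<dots> \<in> N" using assms
    by (simp add: subgroup.m_closed subgroup_int_pow_closed)
  finally show ?thesis .
qed

lemma (in comm_group) ext_subgroup:
  assumes "subgroup N G" "z \<in> carrier G"
  shows "subgroup {n \<otimes> z [^] (i::int) | n i. n \<in> N} G"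
proof
  have Nc: "N \<subseteq> carrier G" using assms subgroup.subset by blast
  show "{n \<otimes> z [^] (i::int) | n i. n \<in> N} \<subseteq> carrier G"
    using Nc assms by auto
  show "\<one> \<in> {n \<otimes> z [^] (i::int) | n i. n \<in> N}"
    using assms by (auto intro!: exI[of _ \<one>] exI[of _ "0::int"] subgroup.one_closed)
next
  fix a b assume "a \<in> {n \<otimes> z [^] (i::int) | n i. n \<in> N}" "b \<in> {n \<otimes> z [^] (i::int) | n i. n \<in> N}"
  then obtain n i m j where a: "a = n \<otimes> z [^] (i::int)" "n \<in> N" and b: "b = m \<otimes> z [^] (j::int)" "m \<in> N"
    by blast
  have c: "n \<in> carrier G" "m \<in> carrier G" using a b assms subgroup.subset by auto
  have zc: "z [^] i \<in> carrier G" "z [^] j \<in> carrier G" using assms by auto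
  have "a \<otimes> b = n \<otimes> (m \<otimes> (z [^] i \<otimes> z [^] j))"
    using a b c zc by (metis m_assoc m_lcomm m_closed)
  also have "\<dots> = (n \<otimes> m) \<otimes> z [^] (i + j)"
    using c zc assms by (simp add: int_pow_mult m_assoc)
  finally have "a \<otimes> b = (n \<otimes> m) \<otimes> z [^] (i + j)" .
  moreover have "n \<otimes> m \<in> N" using a(2) b(2) by (rule subgroup.m_closed[OF assms(1)])
  ultimately show "a \<otimes> b \<in> {n \<otimes> z [^] (i::int) | n i. n \<in> N}"
    by blast
next
  fix a assume "a \<in> {n \<otimes> z [^] (i::int) | n i. n \<in> N}"
  then obtain n i where a: "a = n \<otimes> z [^] (i::int)" "n \<in> N" by blast
  have c: "n \<in> carrier G" using a assms subgroup.subset by auto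
  have zc: "z [^] i \<in> carrier G" using assms by auto
  have "inv a = inv n \<otimes> z [^] (- i)"
  proof -
    have "inv a = inv (z [^] i) \<otimes> inv n" using a c zc by (simp add: inv_mult_group)
    also have "\<dots> = inv n \<otimes> inv (z [^] i)" using c zc by (simp add: m_comm)
    finally show ?thesis using assms by (simp add: int_pow_neg)
  qed
  moreover have "inv n \<in> N" using a(2) by (rule subgroup.m_inv_closed[OF assms(1)])
  ultimately show "inv a \<in> {n \<otimes> z [^] (i::int) | n i. n \<in> N}"
    by blast
qed

lemma (in group) elem_order_p:
  assumes K: "subgroup K G"
  shows "z \<in> K \<Longrightarrow> z \<noteq> \<one> \<Longrightarrow> z [^] ((p::nat) ^ k) = \<one> \<Longrightarrow> \<exists>y\<in>K. y \<noteq> \<one> \<and> y [^] p = \<one>"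
proof (induction k arbitrary: z)
  case 0
  then have "z \<in> carrier G" using K subgroup.subset by blast
  then show ?case using 0 by simp
next
  case (Suc k)
  have zc: "z \<in> carrier G" using Suc K subgroup.subset by blast
  show ?case
  proof (cases "z [^] (p ^ k) = \<one>")
    case True then show ?thesis using Suc by blast
  next
    case False
    have "z [^] (int (p ^ k)) \<in> K" using subgroup_int_pow_closed[OF K Suc.prems(1)] by blast
    then have yK: "z [^] (p ^ k) \<in> K" by (simp only: int_pow_int)
    have "(z [^] (p ^ k)) [^] p = z [^] (p ^ k * p)" using zc by (simp add: nat_pow_pow)
    also have "\<dots> = \<one>" using Suc.prems(3) by (simp add: mult.commute)
    finally show ?thesis using yK False by blast
  qed
qed

lemma (in group) inv_aux: "g \<in> carrier G \<Longrightarrow> a \<in> carrier G \<Longrightarrow> b \<in> carrier G \<Longrightarrow>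
   inv (g \<otimes> inv a) \<otimes> (g \<otimes> inv b) = a \<otimes> inv b"
  by (simp add: inv_mult_group m_assoc[symmetric]) (simp add: m_assoc)

lemma (in comm_group) mult_aux: "g \<in> carrier G \<Longrightarrow> h \<in> carrier G \<Longrightarrow> a \<in> carrier G \<Longrightarrow> b \<in> carrier G \<Longrightarrow>
   (g \<otimes> h) \<otimes> inv (a \<otimes> b) = (g \<otimes> inv a) \<otimes> (h \<otimes> inv b)"
  by (simp add: inv_mult m_ac)

lemma (in comm_group) noncharacteristic:
  assumes fin: "finite (carrier G)" and p: "Factorial_Ring.prime p" and ord: "order G = p ^ n"
    and H: "subgroup H G" and K: "subgroup K G" and HK: "H \<inter> K \<subseteq> {\<one>}"
    and gen: "carrier G \<subseteq> H <#> K" and Hnt: "H \<noteq> {\<one>}" and Knt: "K \<noteq> {\<one>}"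
  shows "\<exists>\<phi> \<in> iso G G. \<phi> ` H \<noteq> H"
proof -
  define SS where "SS = {L. subgroup L G \<and> K \<subseteq> L \<and> L \<noteq> carrier G}"
  have Kne: "K \<noteq> carrier G"
  proof
    assume "K = carrier G"
    then have "H \<subseteq> {\<one>}" using HK H subgroup.subset by blast
    then show False using Hnt subgroup.one_closed[OF H] by blast
  qed
  have KSS: "K \<in> SS" unfolding SS_def using K Kne by blast
  have finSS: "finite SS"
  proof (rule finite_subset)
    show "SS \<subseteq> Pow (carrier G)" unfolding SS_def using subgroup.subset by blast
    show "finite (Pow (carrier G))" using fin by simp
  qed
  obtain N where NSS: "N \<in> SS" and Nmax: "\<And>L. L \<in> SS \<Longrightarrow> card L \<le> card N"
  proof -
    have "Max (card ` SS) \<in> card ` SS" using finSS KSS by (intro Max_in) auto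
    then obtain N where "N \<in> SS" "card N = Max (card ` SS)" by auto
    moreover have "\<And>L. L \<in> SS \<Longrightarrow> card L \<le> Max (card ` SS)" using finSS by simp
    ultimately show ?thesis using that by metis
  qed
  have NG: "subgroup N G" and KN: "K \<subseteq> N" and Nne: "N \<noteq> carrier G"
    using NSS unfolding SS_def by auto
  have Nc: "N \<subseteq> carrier G" using NG subgroup.subset by blast
  have maxl: "L = carrier G" if L: "subgroup L G" "N \<subseteq> L" "L \<noteq> N" for L
  proof (rule ccontr)
    assume "L \<noteq> carrier G"
    then have "L \<in> SS" unfolding SS_def using L KN by blast
    then have "card L \<le> card N" by (rule Nmax)
    moreover have "finite L" using L(1) subgroup.subset fin finite_subset by blast
    ultimately have "N = L" using card_seteq L(2) by blast
    then show False using L(3) by simp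
  qed
  have ext: "{n \<otimes> z [^] (i::int) | n i. n \<in> N} = carrier G" if z: "z \<in> carrier G" "z \<notin> N" for z
  proof (rule maxl)
    show "subgroup {n \<otimes> z [^] (i::int) | n i. n \<in> N} G" using ext_subgroup[OF NG z(1)] .
    show "N \<subseteq> {n \<otimes> z [^] (i::int) | n i. n \<in> N}"
    proof
      fix m assume m: "m \<in> N"
      then have "m = m \<otimes> z [^] (0::int)" using Nc by auto
      then show "m \<in> {n \<otimes> z [^] (i::int) | n i. n \<in> N}" using m by blast
    qed
    have "z = \<one> \<otimes> z [^] (1::int)" using z by simp
    moreover have "\<one> \<in> N" using NG subgroup.one_closed by blast
    ultimately have "z \<in> {n \<otimes> z [^] (i::int) | n i. n \<in> N}" by blast
    then show "{n \<otimes> z [^] (i::int) | n i. n \<in> N} \<noteq> N" using z(2) by blast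
  qed
  obtain x where xH: "x \<in> H" and xN: "x \<notin> N"
  proof -
    have "\<not> H \<subseteq> N"
    proof
      assume HN: "H \<subseteq> N"
      have "carrier G \<subseteq> N"
      proof
        fix g assume "g \<in> carrier G"
        then have "g \<in> H <#> K" using gen by blast
        then obtain h k where "h \<in> H" "k \<in> K" "g = h \<otimes> k" unfolding set_mult_def by blast
        then show "g \<in> N" using HN KN subgroup.m_closed[OF NG] by blast
      qed
      then show False using Nne Nc by blast
    qed
    then show ?thesis using that by blast
  qed
  have xc: "x \<in> carrier G" using xH H subgroup.subset by blast
  have pint: "Factorial_Ring.prime (int p)" using p by simp
  have xdvd: "int p dvd t" if t: "x [^] (t::int) \<in> N" for t
  proof (rule ccontr)
    assume "\<not> int p dvd t"
    then have "coprime (int p) t" using prime_imp_coprime pint by blast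
    moreover have "x [^] (int p) \<in> N"
    proof (rule ccontr)
      assume xp: "x [^] (int p) \<notin> N"
      have xpc: "x [^] (int p) \<in> carrier G" using xc by simp
      have "x \<in> {n \<otimes> (x [^] (int p)) [^] (i::int) | n i. n \<in> N}" using ext[OF xpc xp] xc by blast
      then obtain m i where m: "m \<in> N" "x = m \<otimes> (x [^] (int p)) [^] (i::int)" by blast
      have mc: "m \<in> carrier G" using m Nc by blast
      have "x [^] (1 - int p * i) = x \<otimes> inv (x [^] (int p * i))" using xc by (simp add: int_pow_diff)
      also have "\<dots> = m"
      proof -
        have m2: "x = m \<otimes> x [^] (int p * i)" using m xc by (simp add: int_pow_pow)
        have "x \<otimes> inv (x [^] (int p * i)) = (m \<otimes> x [^] (int p * i)) \<otimes> inv (x [^] (int p * i))"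
          using arg_cong[OF m2, of "\<lambda>u. u \<otimes> inv (x [^] (int p * i))"] .
        also have "\<dots> = m" using mc xc by (simp add: m_assoc)
        finally show ?thesis .
      qed
      finally have 1: "x [^] (1 - int p * i) \<in> N" using m by simp
      have "x [^] (p ^ n) = \<one>" using pow_order_eq_1[OF xc] ord by simp
      then have "x [^] (int (p ^ n)) = \<one>" by (simp only: int_pow_int)
      then have 2: "x [^] (int (p ^ n)) \<in> N" using NG subgroup.one_closed by simp
      have "coprime (1 - int p * i) (int p)"
      proof (rule coprimeI)
        fix c assume c: "c dvd 1 - int p * i" "c dvd int p"
        then have "c dvd int p * i" by simp
        then have "c dvd (1 - int p * i) + int p * i" using c(1) dvd_add by blast
        then show "is_unit c" by simp
      qed
      then have "coprime (1 - int p * i) (int (p ^ n))" by simp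
      then have "x \<in> N" using bezout_mem[OF NG xc 1 2] by blast
      then show False using xN by blast
    qed
    ultimately have "x \<in> N" using bezout_mem[OF NG xc _ t] by (simp add: coprime_commute)
    then show False using xN by blast
  qed
  obtain z where zK: "z \<in> K" and z1: "z \<noteq> \<one>"
    using Knt subgroup.one_closed[OF K] by blast
  have zc: "z \<in> carrier G" using zK K subgroup.subset by blast
  have "z [^] (p ^ n) = \<one>" using pow_order_eq_1[OF zc] ord by simp
  then obtain y where yK: "y \<in> K" and y1: "y \<noteq> \<one>" and yp: "y [^] p = \<one>"
    using elem_order_p[OF K zK z1] by blast
  have yc: "y \<in> carrier G" using yK K subgroup.subset by blast
  have yN: "y \<in> N" using yK KN by blast
  have ypi: "y [^] (int p) = \<one>" using yp by (simp only: int_pow_int)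
  have ypow: "y [^] a = y [^] b" if "int p dvd (a - b)" for a b :: int
  proof -
    from that obtain q where q: "a - b = int p * q" by (elim dvdE)
    have "y [^] (a - b) = \<one>" unfolding q using yc ypi by (simp add: int_pow_pow[symmetric])
    moreover have "y [^] a = y [^] (a - b) \<otimes> y [^] b"
      using yc int_pow_mult[OF yc, of "a - b" b] by simp
    ultimately show ?thesis using yc by simp
  qed
  define R where "R g i \<longleftrightarrow> g \<otimes> inv (x [^] (i::int)) \<in> N" for g i
  have Rex: "\<exists>i. R g i" if g: "g \<in> carrier G" for g
  proof -
    have "g \<in> {n \<otimes> x [^] (i::int) | n i. n \<in> N}" using ext[OF xc xN] g by blast
    then obtain m i where m: "m \<in> N" "g = m \<otimes> x [^] (i::int)" by blast
    have mc: "m \<in> carrier G" using m Nc by blast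
    have "g \<otimes> inv (x [^] i) = m" using m(2) mc xc by (simp add: m_assoc)
    then show ?thesis unfolding R_def using m(1) by auto
  qed
  have Rdiff: "int p dvd (i - j)" if "g \<in> carrier G" "R g i" "R g j" for g i j
  proof (rule xdvd)
    have "x [^] (i - j) = inv (g \<otimes> inv (x [^] i)) \<otimes> (g \<otimes> inv (x [^] j))"
      using that(1) xc by (simp add: inv_aux int_pow_diff)
    also have "\<dots> \<in> N" using that(2,3) unfolding R_def
      using subgroup.m_closed[OF NG] subgroup.m_inv_closed[OF NG] by simp
    finally show "x [^] (i - j) \<in> N" .
  qed
  define c where "c g = (SOME i. R g i)" for g
  have cR: "R g (c g)" if "g \<in> carrier G" for g
    unfolding c_def using Rex[OF that] by (rule someI_ex)
  define \<phi> where "\<phi> g = g \<otimes> y [^] (c g)" for g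
  have \<phi>c: "\<phi> g \<in> carrier G" if "g \<in> carrier G" for g
    unfolding \<phi>_def using that yc by simp
  have \<phi>mult: "\<phi> (g \<otimes> h) = \<phi> g \<otimes> \<phi> h" if gh: "g \<in> carrier G" "h \<in> carrier G" for g h
  proof -
    have "R (g \<otimes> h) (c g + c h)"
    proof -
      have "(g \<otimes> h) \<otimes> inv (x [^] (c g + c h)) = (g \<otimes> inv (x [^] (c g))) \<otimes> (h \<otimes> inv (x [^] (c h)))"
        using gh xc by (simp add: int_pow_mult mult_aux)
      also have "\<dots> \<in> N" using cR[OF gh(1)] cR[OF gh(2)] unfolding R_def
        using subgroup.m_closed[OF NG] by simp
      finally show ?thesis unfolding R_def .
    qed
    moreover have ghc: "g \<otimes> h \<in> carrier G" using gh by simp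
    ultimately have "int p dvd (c (g \<otimes> h) - (c g + c h))" using Rdiff[OF ghc cR[OF ghc]] by blast
    then have "y [^] (c (g \<otimes> h)) = y [^] (c g + c h)" by (rule ypow)
    also have "\<dots> = y [^] (c g) \<otimes> y [^] (c h)" using yc by (simp add: int_pow_mult)
    finally have e: "y [^] (c (g \<otimes> h)) = y [^] (c g) \<otimes> y [^] (c h)" .
    have yc1: "y [^] (c g) \<in> carrier G" "y [^] (c h) \<in> carrier G" using yc by auto
    show ?thesis unfolding \<phi>_def e using gh yc1 by (simp add: m_ac)
  qed
  have hom: "\<phi> \<in> hom G G" unfolding hom_def using \<phi>c \<phi>mult by auto
  have ker: "g = \<one>" if g: "g \<in> carrier G" "\<phi> g = \<one>" for g
  proof -
    have yg: "y [^] (c g) \<in> carrier G" using yc by simp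
    have "inv (y [^] (c g)) = g" using g yg unfolding \<phi>_def by (intro inv_equality) auto
    moreover have "y [^] (c g) \<in> N" using subgroup_int_pow_closed[OF NG yN] by blast
    ultimately have "g \<in> N" using subgroup.m_inv_closed[OF NG] by metis
    then have "R g 0" unfolding R_def using g by simp
    then have "int p dvd (c g - 0)" using Rdiff cR g by blast
    then have "y [^] (c g) = y [^] (0::int)" by (rule ypow)
    then show ?thesis using g unfolding \<phi>_def by simp
  qed
  have inj: "inj_on \<phi> (carrier G)"
  proof -
    interpret gh: group_hom G G \<phi> using hom by (simp add: group_hom_def group_hom_axioms_def is_group)
    have "kernel G G \<phi> = {\<one>}" unfolding kernel_def using ker gh.hom_one by auto
    then show ?thesis using gh.inj_iff_trivial_ker by simp
  qed
  have surj: "\<phi> ` carrier G = carrier G" using endo_inj_surj[OF fin _ inj] \<phi>c by blast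
  have iso: "\<phi> \<in> iso G G" unfolding iso_def bij_betw_def using hom inj surj by simp
  have "R x 1" unfolding R_def using xc NG subgroup.one_closed by simp
  then have "int p dvd (c x - 1)" using Rdiff cR xc by blast
  then have "y [^] (c x) = y [^] (1::int)" by (rule ypow)
  then have \<phi>x: "\<phi> x = x \<otimes> y" unfolding \<phi>_def using yc by simp
  have "\<phi> ` H \<noteq> H"
  proof
    assume "\<phi> ` H = H"
    then have "x \<otimes> y \<in> H" using imageI[OF xH, of \<phi>] \<phi>x by simp
    then have "inv x \<otimes> (x \<otimes> y) \<in> H" by (rule subgroup.m_closed[OF H subgroup.m_inv_closed[OF H xH]])
    moreover have eq: "inv x \<otimes> (x \<otimes> y) = y" using xc yc by (simp add: m_assoc[symmetric])
    ultimately have "y \<in> H" by metis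
    then have "y \<in> H \<inter> K" using yK by simp
    then show False using HK y1 by auto
  qed
  then show ?thesis using iso by blast
qed

lemma (in group) char_one: "{\<one>} \<in> Char G"
  unfolding Char_def characteristic_subgroup_def
proof (intro CollectI conjI ballI triv_subgroup)
  fix \<phi> assume "\<phi> \<in> iso G G"
  then have "\<phi> \<in> hom G G" unfolding iso_def by simp
  then have "\<phi> \<one> = \<one>" using hom_one[of \<phi> G G] is_group by simp
  then show "\<phi> ` {\<one>} = {\<one>}" by simp
qed

lemma (in group) char_carrier: "carrier G \<in> Char G"
  unfolding Char_def characteristic_subgroup_def
  by (auto simp: iso_def bij_betw_def subgroup_self)

lemma (in group) char_sub: "H \<in> Char G \<Longrightarrow> subgroup H G"
  unfolding Char_def characteristic_subgroup_def by simp

lemma (in group) char_Int: assumes "H \<in> Char G" "K \<in> Char G" shows "H \<inter> K \<in> Char G"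
  unfolding Char_def characteristic_subgroup_def
proof (intro CollectI conjI ballI)
  show "subgroup (H \<inter> K) G" using assms char_sub subgroups_Inter_pair by blast
  fix \<phi> assume phi: "\<phi> \<in> iso G G"
  then have "inj_on \<phi> (carrier G)" unfolding iso_def bij_betw_def by simp
  then have "\<phi> ` (H \<inter> K) = \<phi> ` H \<inter> \<phi> ` K"
    using assms char_sub subgroup.subset by (intro inj_on_image_Int) blast+
  also have "\<dots> = H \<inter> K" using assms phi unfolding Char_def characteristic_subgroup_def by simp
  finally show "\<phi> ` (H \<inter> K) = H \<inter> K" .
qed

lemma (in comm_group) char_mult: assumes "H \<in> Char G" "K \<in> Char G" shows "H <#> K \<in> Char G"
  unfolding Char_def characteristic_subgroup_def
proof (intro CollectI conjI ballI)
  show "subgroup (H <#> K) G" using assms char_sub mult_subgroups by blast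
  fix \<phi> assume phi: "\<phi> \<in> iso G G"
  then have "\<phi> \<in> hom G G" unfolding iso_def by simp
  then have "\<phi> ` (H <#> K) = \<phi> ` H <#> \<phi> ` K"
    using assms char_sub subgroup.subset by (intro set_mult_hom) blast+
  also have "\<dots> = H <#> K" using assms phi unfolding Char_def characteristic_subgroup_def by simp
  finally show "\<phi> ` (H <#> K) = H <#> K" .
qed

theorem mainTheorem14:
  fixes G :: "('g, 'm) monoid_scheme" and p :: nat
    and f :: "'g set \<Rightarrow> ('a::lattice) \<times> ('b::lattice)"
  assumes "comm_group G" and "finite (carrier G)"
    and "Factorial_Ring.prime p" and "\<exists>n. order G = p ^ n"
    and "\<exists>x y :: 'a. x \<noteq> y" and "\<exists>x y :: 'b. x \<noteq> y"
  shows "\<not> (bij_betw f (Char G) UNIV \<and>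
            (\<forall>H \<in> Char G. \<forall>K \<in> Char G.
               H \<subseteq> K \<longleftrightarrow> (fst (f H) \<le> fst (f K) \<and> snd (f H) \<le> snd (f K))))"
proof
  assume A: "bij_betw f (Char G) UNIV \<and>
            (\<forall>H \<in> Char G. \<forall>K \<in> Char G.
               H \<subseteq> K \<longleftrightarrow> (fst (f H) \<le> fst (f K) \<and> snd (f H) \<le> snd (f K)))"
  interpret comm_group G by (rule assms(1))
  obtain n where ord: "order G = p ^ n" using assms(4) by blast
  have le: "H \<subseteq> K \<longleftrightarrow> (fst (f H) \<le> fst (f K) \<and> snd (f H) \<le> snd (f K))"
    if "H \<in> Char G" "K \<in> Char G" for H K using A that by blast
  have surj: "\<exists>L\<in>Char G. f L = u" for u
    using A bij_betw_imp_surj_on by (metis UNIV_I imageE)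
  have csub: "L \<subseteq> carrier G" if "L \<in> Char G" for L using that char_sub subgroup.subset by blast
  have cone: "{\<one>\<^bsub>G\<^esub>} \<subseteq> L" if "L \<in> Char G" for L using that char_sub subgroup.one_closed by blast
  define a0 where "a0 = fst (f {\<one>\<^bsub>G\<^esub>})"
  define b0 where "b0 = snd (f {\<one>\<^bsub>G\<^esub>})"
  define a1 where "a1 = fst (f (carrier G))"
  define b1 where "b1 = snd (f (carrier G))"
  have bnds: "a0 \<le> a \<and> a \<le> a1 \<and> b0 \<le> b \<and> b \<le> b1" for a b
  proof -
    obtain L where L: "L \<in> Char G" "f L = (a, b)" using surj by blast
    have "{\<one>\<^bsub>G\<^esub>} \<subseteq> L" using cone L(1) by blast
    then have 1: "a0 \<le> a \<and> b0 \<le> b" using le[OF char_one L(1)] L(2) a0_def b0_def by simp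
    have "L \<subseteq> carrier G" using csub L(1) by blast
    then have 2: "a \<le> a1 \<and> b \<le> b1" using le[OF L(1) char_carrier] L(2) a1_def b1_def by simp
    show ?thesis using 1 2 by simp
  qed
  obtain H0 where H0: "H0 \<in> Char G" "f H0 = (a1, b0)" using surj by blast
  obtain K0 where K0: "K0 \<in> Char G" "f K0 = (a0, b1)" using surj by blast
  have f1: "f {\<one>\<^bsub>G\<^esub>} = (a0, b0)" using a0_def b0_def by simp
  have Hnt: "H0 \<noteq> {\<one>\<^bsub>G\<^esub>}"
  proof
    assume "H0 = {\<one>\<^bsub>G\<^esub>}"
    then have eq: "a1 = a0" using H0(2) f1 by simp
    obtain u v :: 'a where uv: "u \<noteq> v" using assms(5) by blast
    have "u = a0" using bnds[of u b0] eq by (metis order_antisym)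
    moreover have "v = a0" using bnds[of v b0] eq by (metis order_antisym)
    ultimately show False using uv by simp
  qed
  have Knt: "K0 \<noteq> {\<one>\<^bsub>G\<^esub>}"
  proof
    assume "K0 = {\<one>\<^bsub>G\<^esub>}"
    then have eq: "b1 = b0" using K0(2) f1 by simp
    obtain u v :: 'b where uv: "u \<noteq> v" using assms(6) by blast
    have "u = b0" using bnds[of a0 u] eq by (metis order_antisym)
    moreover have "v = b0" using bnds[of a0 v] eq by (metis order_antisym)
    ultimately show False using uv by simp
  qed
  have HK: "H0 \<inter> K0 \<subseteq> {\<one>\<^bsub>G\<^esub>}"
  proof -
    have I: "H0 \<inter> K0 \<in> Char G" using char_Int H0(1) K0(1) by blast
    have "fst (f (H0 \<inter> K0)) \<le> a1 \<and> snd (f (H0 \<inter> K0)) \<le> b0"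
      using le[OF I H0(1)] H0(2) by simp
    moreover have "fst (f (H0 \<inter> K0)) \<le> a0 \<and> snd (f (H0 \<inter> K0)) \<le> b1"
      using le[OF I K0(1)] K0(2) by simp
    ultimately show ?thesis using le[OF I char_one] f1 by simp
  qed
  have gen: "carrier G \<subseteq> H0 <#>\<^bsub>G\<^esub> K0"
  proof -
    have P: "H0 <#>\<^bsub>G\<^esub> K0 \<in> Char G" using char_mult H0(1) K0(1) by blast
    have "H0 \<subseteq> H0 <#>\<^bsub>G\<^esub> K0"
    proof
      fix h assume h: "h \<in> H0"
      then have "h = h \<otimes>\<^bsub>G\<^esub> \<one>\<^bsub>G\<^esub>" using csub[OF H0(1)] by auto
      moreover have "\<one>\<^bsub>G\<^esub> \<in> K0" using cone[OF K0(1)] by blast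
      ultimately show "h \<in> H0 <#>\<^bsub>G\<^esub> K0" unfolding set_mult_def using h by blast
    qed
    then have 1: "a1 \<le> fst (f (H0 <#>\<^bsub>G\<^esub> K0))" using le[OF H0(1) P] H0(2) by simp
    have "K0 \<subseteq> H0 <#>\<^bsub>G\<^esub> K0"
    proof
      fix k assume k: "k \<in> K0"
      then have "k = \<one>\<^bsub>G\<^esub> \<otimes>\<^bsub>G\<^esub> k" using csub[OF K0(1)] by auto
      moreover have "\<one>\<^bsub>G\<^esub> \<in> H0" using cone[OF H0(1)] by blast
      ultimately show "k \<in> H0 <#>\<^bsub>G\<^esub> K0" unfolding set_mult_def using k by blast
    qed
    then have 2: "b1 \<le> snd (f (H0 <#>\<^bsub>G\<^esub> K0))" using le[OF K0(1) P] K0(2) by simp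
    show ?thesis using le[OF char_carrier P] 1 2 a1_def b1_def by simp
  qed
  obtain \<phi> where phi: "\<phi> \<in> iso G G" "\<phi> ` H0 \<noteq> H0"
    using noncharacteristic[OF assms(2) assms(3) ord char_sub[OF H0(1)] char_sub[OF K0(1)] HK gen Hnt Knt]
    by blast
  then show False using H0(1) unfolding Char_def characteristic_subgroup_def by blast
qed

end
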